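(* Let $(E \xrightarrow{Q} K,\gamma)$ be a projected cone with dual projected cone $(F\xrightarrow{P} N,\delta)$, and let $L := \ker(P)$. Let $\gamma_1,\gamma_2\preceq\gamma$ be faces and $\delta_i := \gamma_i^{*}$. Then the following are equivalent: (i) there is an $L$-invariant separating linear form for $\delta_1$ and $\delta_2$; (ii) $Q(\gamma_1)^{\circ}\cap Q(\gamma_2)^{\circ}\neq\emptyset$.
   Context: Lattices are finitely generated free abelian groups, $E_{\mathbb Q}:=\mathbb Q\otimes E$; cones are convex polyhedral cones, $\tau^\circ$ denotes relative interior, $\preceq$ the face relation, $\sigma^\perp$ and $\sigma^\vee$ the orthogonal space and dual cone in the dual vector space. A projected cone $(E\xrightarrow{Q}K,\gamma)$ is a surjective lattice homomorphism $Q\colon E\to K$ with a simplicial full-dimensional cone $\gamma\subset E_{\mathbb Q}$. Its dual projected cone $(F\xrightarrow{P}N,\delta)$ is defined by $M:=\ker Q$, $F:=\mathrm{Hom}(E,\mathbb Z)$, $N:=\mathrm{Hom}(M,\mathbb Z)$, $P\colon F\to N$ the restriction map, and $\delta:=\gamma^\vee\subset F_{\mathbb Q}$ (so $0\to\mathrm{Hom}(K,\mathbb Z)\to F\xrightarrow{P} N\to 0$ is exact; note $P$ is not the dual of $Q$). For a face $\gamma_0\preceq\gamma$ put $\gamma_0^{*}:=\gamma_0^\perp\cap\delta$ (this is an order-reversing bijection between faces of $\gamma$ and of $\delta$). An $L$-invariant linear form is an element $u\in E=\mathrm{Hom}(F,\mathbb Z)$ with $L\subset u^\perp$. A separating linear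 form for cones $\delta_1,\delta_2$ is a $u$ with $u|_{\delta_1}\ge 0$, $u|_{\delta_2}\le 0$ and $u^\perp\cap\delta_1=u^\perp\cap\delta_2=\delta_1\cap\delta_2$. *)

theory Defs
  imports "HOL-Analysis.Analysis"
begin

text \<open>Lattices are modelled as integer points of real coordinate spaces;
  a lattice of rank n is identified with the integer vectors in real^'n.\<close>

definition int_vecs :: "(real ^ 'n) set" where
  "int_vecs = {x. \<forall>i. x $ i \<in> \<int>}"

definition rat_vecs :: "(real ^ 'n) set" where
  "rat_vecs = {x. \<forall>i. x $ i \<in> \<rat>}"

text \<open>Cone generated by a family of vectors (nonnegative combinations).\<close>
definition gen_cone :: "('i::finite \<Rightarrow> real ^ 'n) \<Rightarrow> (real ^ 'n) set" where
  "gen_cone v = {(\<Sum>i\<in>UNIV. c i *\<^sub>R v i) | c. \<forall>i. 0 \<le> c i}"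

text \<open>Dual cone (in the dual space, identified with real^'n via the dot product).\<close>
definition dual_cone :: "(real ^ 'n) set \<Rightarrow> (real ^ 'n) set" where
  "dual_cone S = {f. \<forall>x\<in>S. 0 \<le> f \<bullet> x}"

definition orth :: "(real ^ 'n) set \<Rightarrow> (real ^ 'n) set" where
  "orth S = {f. \<forall>x\<in>S. f \<bullet> x = 0}"

text \<open>Face relation of cones: tau is a face of sigma iff tau = sigma \<inter> u^perp
  for some u in the dual cone of sigma.\<close>
definition cone_face :: "(real ^ 'n) set \<Rightarrow> (real ^ 'n) set \<Rightarrow> bool" where
  "cone_face \<tau> \<sigma> \<longleftrightarrow> (\<exists>u. u \<in> dual_cone \<sigma> \<and> \<tau> = \<sigma> \<inter> {x. u \<bullet> x = 0})"

text \<open>Face dual: gamma0^* = gamma0^perp \<inter> delta.\<close>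
definition face_star :: "(real ^ 'n) set \<Rightarrow> (real ^ 'n) set \<Rightarrow> (real ^ 'n) set" where
  "face_star \<delta> \<gamma>0 = orth \<gamma>0 \<inter> \<delta>"

text \<open>u (a linear form on F, i.e. an element of E) separates the cones d1, d2.\<close>
definition separating_form :: "real ^ 'n \<Rightarrow> (real ^ 'n) set \<Rightarrow> (real ^ 'n) set \<Rightarrow> bool" where
  "separating_form u d1 d2 \<longleftrightarrow>
     (\<forall>f\<in>d1. 0 \<le> u \<bullet> f) \<and> (\<forall>f\<in>d2. u \<bullet> f \<le> 0) \<and>
     d1 \<inter> {f. u \<bullet> f = 0} = d1 \<inter> d2 \<and> d2 \<inter> {f. u \<bullet> f = 0} = d1 \<inter> d2"

end

theory Submission
  imports Defs "HOL-Analysis.Analysis"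
begin


definition Sset :: "'n set \<Rightarrow> (real ^ 'n) set" where
  "Sset I = {c. (\<forall>j. 0 \<le> c$j) \<and> (\<forall>j. j \<notin> I \<longrightarrow> c$j = 0)}"

definition Spos :: "'n set \<Rightarrow> (real ^ 'n) set" where
  "Spos I = {c. (\<forall>j\<in>I. 0 < c$j) \<and> (\<forall>j. j \<notin> I \<longrightarrow> c$j = 0)}"

lemma convex_Sset: "convex (Sset I)"
  unfolding convex_def Sset_def by (auto intro!: add_nonneg_nonneg mult_nonneg_nonneg)

lemma affine_hull_Sset: "affine hull (Sset (I::'n::finite set)) \<subseteq> {c. \<forall>j. j \<notin> I \<longrightarrow> c$j = 0}"
proof (rule hull_minimal)
  show "Sset I \<subseteq> {c. \<forall>j. j \<notin> I \<longrightarrow> c$j = 0}" unfolding Sset_def by auto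
  show "affine {c::real^'n. \<forall>j. j \<notin> I \<longrightarrow> c$j = 0}"
    unfolding affine_def by auto
qed

lemma rel_interior_Sset: "rel_interior (Sset (I::'n::finite set)) = Spos I"
proof
  show "rel_interior (Sset I) \<subseteq> Spos I"
  proof
    fix c assume c: "c \<in> rel_interior (Sset I)"
    then have cS: "c \<in> Sset I" and "\<exists>e>0. ball c e \<inter> affine hull (Sset I) \<subseteq> Sset I"
      using mem_rel_interior_ball by blast+
    then obtain e where e: "e > 0" "ball c e \<inter> affine hull (Sset I) \<subseteq> Sset I" by blast
    have "0 < c$j" if j: "j \<in> I" for j
    proof (rule ccontr)
      assume "\<not> 0 < c$j"
      moreover have "0 \<le> c$j" using cS unfolding Sset_def by blast
      ultimately have cj: "c$j = 0" by linarith
      define y where "y = c - (e/2) *\<^sub>R axis j 1"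
      have c1: "c + axis j 1 \<in> Sset I" using cS j unfolding Sset_def by (auto simp: axis_def)
      have "y = (1 + e/2) *\<^sub>R c + (- (e/2)) *\<^sub>R (c + axis j 1)"
        unfolding y_def by (simp add: algebra_simps)
      moreover have "(1 + e/2) + (- (e/2)) = (1::real)" by simp
      ultimately have "y \<in> affine hull (Sset I)"
        using affine_affine_hull[of "Sset I"] hull_subset[of "Sset I" affine] cS c1
        unfolding affine_def by blast
      moreover have "y \<in> ball c e" using e(1)
        by (simp add: y_def dist_norm)
      ultimately have "y \<in> Sset I" using e(2) by blast
      then have "0 \<le> y$j" unfolding Sset_def by blast
      then show False using cj e(1) by (simp add: y_def)
    qed
    then show "c \<in> Spos I" using cS unfolding Sset_def Spos_def by blast
  qed
next
  show "Spos I \<subseteq> rel_interior (Sset I)"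
  proof
    fix c assume c: "c \<in> Spos I"
    define e where "e = Min (insert 1 ((\<lambda>j. c$j) ` I))"
    have e0: "e > 0" unfolding e_def using c by (auto simp: Spos_def)
    have ej: "e \<le> c$j" if "j \<in> I" for j unfolding e_def using that by auto
    have cS: "c \<in> Sset I" using c unfolding Spos_def Sset_def by (auto intro: less_imp_le)
    have "ball c e \<inter> affine hull (Sset I) \<subseteq> Sset I"
    proof
      fix y assume y: "y \<in> ball c e \<inter> affine hull (Sset I)"
      then have y0: "\<forall>j. j \<notin> I \<longrightarrow> y$j = 0" using affine_hull_Sset by blast
      have "0 \<le> y$j" for j
      proof (cases "j \<in> I")
        case True
        have "\<bar>(c - y)$j\<bar> \<le> norm (c - y)" by (rule component_le_norm_cart)
        also have "\<dots> < e" using y by (simp add: dist_norm)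
        finally show ?thesis using ej[OF True] by simp
      qed (use y0 in auto)
      then show "y \<in> Sset I" using y0 unfolding Sset_def by blast
    qed
    then show "c \<in> rel_interior (Sset I)" using cS e0 mem_rel_interior_ball by blast
  qed
qed




definition Vm :: "('e \<Rightarrow> real ^ 'e) \<Rightarrow> real ^ 'e ^ 'e" where
  "Vm v = (\<chi> i j. v j $ i)"

lemma Vm_mult: "Vm v *v c = (\<Sum>j\<in>UNIV. c$j *\<^sub>R v j)"
  by (simp add: matrix_mult_sum scalar_mult_eq_scaleR column_def Vm_def)

lemma Vt_nth: "(transpose (Vm v) *v f) $ j = v j \<bullet> f"
  by (simp add: matrix_vector_mult_def transpose_def Vm_def inner_vec_def mult.commute)

lemma Vt_nth': "(f v* Vm v) $ j = v j \<bullet> f"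
  using Vt_nth[of v f j] by simp

lemma inner_Vm: "f \<bullet> (Vm v *v c) = (\<Sum>j\<in>UNIV. c$j * (f \<bullet> v j))"
  by (simp add: Vm_mult inner_sum_right)

lemma inner_Vm2: "(Vm v *v c) \<bullet> f = c \<bullet> (transpose (Vm v) *v f)"
proof -
  have "(Vm v *v c) \<bullet> f = f \<bullet> (Vm v *v c)" by (rule inner_commute)
  also have "\<dots> = (\<Sum>j\<in>UNIV. c$j * (v j \<bullet> f))" by (simp add: inner_Vm inner_commute)
  also have "\<dots> = c \<bullet> (transpose (Vm v) *v f)" unfolding inner_vec_def Vt_nth by simp
  finally show ?thesis .
qed

lemma Vm_axis: "Vm v *v axis k 1 = v k"
proof -
  have "(\<Sum>j\<in>UNIV. axis k (1::real) $ j *\<^sub>R v j) = (\<Sum>j\<in>{k}. axis k (1::real) $ j *\<^sub>R v j)"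
    by (rule sum.mono_neutral_right) (auto simp: axis_def)
  then show ?thesis by (simp add: Vm_mult)
qed

lemma Vm_inv:
  fixes v :: "'e::finite \<Rightarrow> real ^ 'e"
  assumes ind: "independent (range v)" and inj: "inj v"
  shows "\<exists>B. B ** Vm v = mat 1 \<and> Vm v ** B = mat 1"
proof -
  have "\<forall>c. (\<Sum>i\<in>UNIV. c i *s column i (Vm v)) = 0 \<longrightarrow> (\<forall>i. c i = 0)"
  proof (intro allI impI)
    fix c :: "'e \<Rightarrow> real" and i
    assume h: "(\<Sum>i\<in>UNIV. c i *s column i (Vm v)) = 0"
    have col: "column i (Vm v) = v i" for i by (simp add: column_def Vm_def)
    have "(\<Sum>w\<in>range v. (c \<circ> inv v) w *\<^sub>R w) = (\<Sum>i\<in>UNIV. (c \<circ> inv v) (v i) *\<^sub>R v i)"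
      by (rule sum.reindex[OF inj, unfolded comp_def])
    also have "\<dots> = (\<Sum>i\<in>UNIV. c i *\<^sub>R v i)" using inj by simp
    also have "\<dots> = 0" using h by (simp add: col scalar_mult_eq_scaleR)
    finally have s: "(\<Sum>w\<in>range v. (c \<circ> inv v) w *\<^sub>R w) = 0" .
    show "c i = 0"
    proof (rule ccontr)
      assume "c i \<noteq> 0"
      then have "(c \<circ> inv v) (v i) \<noteq> 0" using inj by simp
      moreover have "finite (range v)" by simp
      ultimately have "dependent (range v)"
        using s real_vector.dependent_finite[of "range v"] rangeI[of v i] by blast
      then show False using ind by blast
    qed
  qed
  then obtain B where "B ** Vm v = mat 1" using matrix_left_invertible_independent_columns by blast
  then show ?thesis using matrix_left_right_inverse by blast
qed

lemma Vt_surj: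
  assumes "B ** Vm v = mat 1"
  shows "\<exists>f. transpose (Vm v) *v f = x"
proof -
  have "transpose (Vm v) ** transpose B = mat 1"
    using assms by (metis matrix_transpose_mul transpose_mat)
  then have "transpose (Vm v) *v (transpose B *v x) = x"
    by (metis matrix_vector_mul_assoc matrix_vector_mul_lid)
  then show ?thesis by blast
qed

lemma gen_cone_Vm: "gen_cone v = (\<lambda>c. Vm v *v c) ` Sset UNIV"
proof -
  have "gen_cone v = {(\<Sum>i\<in>UNIV. c i *\<^sub>R v i) | c. \<forall>i. 0 \<le> c i}" by (simp add: gen_cone_def)
  also have "\<dots> = (\<lambda>c. Vm v *v c) ` Sset UNIV"
  proof safe
    fix c :: "'a \<Rightarrow> real" assume "\<forall>i. 0 \<le> c i"
    then show "(\<Sum>i\<in>UNIV. c i *\<^sub>R v i) \<in> (\<lambda>c. Vm v *v c) ` Sset UNIV"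
      by (intro image_eqI[of _ _ "vec_lambda c"]) (auto simp: Vm_mult Sset_def)
  next
    fix c assume "c \<in> Sset (UNIV::'a set)"
    then show "\<exists>d. Vm v *v c = (\<Sum>i\<in>UNIV. d i *\<^sub>R v i) \<and> (\<forall>i. 0 \<le> d i)"
      by (intro exI[of _ "vec_nth c"]) (auto simp: Vm_mult Sset_def)
  qed
  finally show ?thesis .
qed

lemma v_in_gen_cone: fixes v :: "'e::finite \<Rightarrow> real ^ 'e" shows "v k \<in> gen_cone v"
proof -
  have "Vm v *v axis k 1 \<in> (\<lambda>c. Vm v *v c) ` Sset UNIV" by (auto simp: Sset_def axis_def)
  then show ?thesis using Vm_axis[of v k] gen_cone_Vm[of v] by metis
qed

lemma face_Vm:
  fixes v :: "'e::finite \<Rightarrow> real ^ 'e"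
  assumes "cone_face \<gamma>1 (gen_cone v)"
  shows "\<exists>I. \<gamma>1 = (\<lambda>c. Vm v *v c) ` Sset I"
proof -
  obtain w where w: "w \<in> dual_cone (gen_cone v)" "\<gamma>1 = gen_cone v \<inter> {x. w \<bullet> x = 0}"
    using assms unfolding cone_face_def by blast
  have wpos: "0 \<le> w \<bullet> v j" for j using w(1) v_in_gen_cone unfolding dual_cone_def by blast
  define I where "I = {j. w \<bullet> v j = 0}"
  have "\<gamma>1 = (\<lambda>c. Vm v *v c) ` Sset I"
  proof safe
    fix x assume "x \<in> \<gamma>1"
    then have "x \<in> (\<lambda>c. Vm v *v c) ` Sset UNIV" "w \<bullet> x = 0"
      using w(2) gen_cone_Vm[of v] by auto
    then obtain c where c: "c \<in> Sset UNIV" "x = Vm v *v c" "w \<bullet> x = 0"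
      by auto
    have tn: "\<forall>j\<in>UNIV. 0 \<le> c$j * (w \<bullet> v j)" using c(1) wpos by (simp add: Sset_def)
    have "(\<Sum>j\<in>UNIV. c$j * (w \<bullet> v j)) = 0" using c(2,3) inner_Vm by metis
    then have "\<forall>j\<in>UNIV. c$j * (w \<bullet> v j) = 0" using sum_nonneg_eq_0_iff[of UNIV "\<lambda>j. c$j * (w \<bullet> v j)"] tn by simp
    then have "c \<in> Sset I" using c(1) by (auto simp: Sset_def I_def)
    then show "x \<in> (\<lambda>c. Vm v *v c) ` Sset I" using c(2) by blast
  next
    fix c assume c: "c \<in> Sset I"
    then show "Vm v *v c \<in> \<gamma>1"
      using w(2) gen_cone_Vm[of v] by (auto simp: Sset_def inner_Vm I_def intro!: sum.neutral)
  qed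
  then show ?thesis by blast
qed

lemma dual_cone_Vm: fixes v :: "'e::finite \<Rightarrow> real ^ 'e" shows "dual_cone (gen_cone v) = {f. \<forall>j. 0 \<le> v j \<bullet> f}"
proof safe
  fix f j assume "f \<in> dual_cone (gen_cone v)"
  then show "0 \<le> v j \<bullet> f" unfolding dual_cone_def using v_in_gen_cone[of v j] by (metis mem_Collect_eq inner_commute)
next
  fix f assume "\<forall>j. 0 \<le> v j \<bullet> f"
  then show "f \<in> dual_cone (gen_cone v)"
    by (auto simp: dual_cone_def gen_cone_Vm inner_Vm Sset_def inner_commute intro!: sum_nonneg)
qed

lemma face_star_Vm: fixes v :: "'e::finite \<Rightarrow> real ^ 'e" shows
  "face_star (dual_cone (gen_cone v)) ((\<lambda>c. Vm v *v c) ` Sset I) = {f. transpose (Vm v) *v f \<in> Sset (- I)}"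
proof -
  have orth: "f \<in> orth ((\<lambda>c. Vm v *v c) ` Sset I) \<longleftrightarrow> (\<forall>j\<in>I. v j \<bullet> f = 0)" for f
  proof
    assume "f \<in> orth ((\<lambda>c. Vm v *v c) ` Sset I)"
    then have o: "\<forall>x\<in>(\<lambda>c. Vm v *v c) ` Sset I. f \<bullet> x = 0" unfolding orth_def by blast
    show "\<forall>j\<in>I. v j \<bullet> f = 0"
    proof
      fix j assume "j \<in> I"
      then have "axis j 1 \<in> Sset I" by (auto simp: Sset_def axis_def)
      then have "f \<bullet> (Vm v *v axis j 1) = 0" using o by blast
      then show "v j \<bullet> f = 0" by (simp add: Vm_axis inner_commute)
    qed
  next
    assume "\<forall>j\<in>I. v j \<bullet> f = 0"
    then show "f \<in> orth ((\<lambda>c. Vm v *v c) ` Sset I)"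
      by (auto simp: orth_def inner_Vm Sset_def inner_commute intro!: sum.neutral)
  qed
  show ?thesis unfolding face_star_def dual_cone_Vm
    using orth by (auto simp: Sset_def Vt_nth')
qed




definition sign_ok :: "'n set \<Rightarrow> 'n set \<Rightarrow> real ^ 'n \<Rightarrow> bool" where
  "sign_ok I1 I2 c \<longleftrightarrow> (\<forall>j. j \<in> I2 \<and> j \<notin> I1 \<longrightarrow> 0 < c$j) \<and> (\<forall>j. j \<in> I1 \<and> j \<notin> I2 \<longrightarrow> c$j < 0)
     \<and> (\<forall>j. j \<notin> I1 \<and> j \<notin> I2 \<longrightarrow> c$j = 0)"

lemma sign_ok_sym: "sign_ok I1 I2 c \<Longrightarrow> sign_ok I2 I1 (-c)"
  unfolding sign_ok_def by auto

lemma sign_inner1: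
  fixes c :: "real ^ 'n::finite"
  assumes s: "sign_ok I1 I2 c" and x: "x \<in> Sset (- I1)"
  shows "0 \<le> c \<bullet> x" and "c \<bullet> x = 0 \<Longrightarrow> x \<in> Sset (- I2)"
proof -
  have t: "0 \<le> c$j * x$j" for j
  proof (cases "j \<in> I1")
    case True then show ?thesis using x by (simp add: Sset_def)
  next
    case False
    then have "0 \<le> c$j" using s unfolding sign_ok_def by (metis less_imp_le order_refl)
    moreover have "0 \<le> x$j" using x by (simp add: Sset_def)
    ultimately show ?thesis by simp
  qed
  have eq: "c \<bullet> x = (\<Sum>j\<in>UNIV. c$j * x$j)" by (simp add: inner_vec_def)
  show "0 \<le> c \<bullet> x" unfolding eq by (rule sum_nonneg) (use t in auto)
  assume "c \<bullet> x = 0"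
  then have z: "\<forall>j\<in>UNIV. c$j * x$j = 0"
    using sum_nonneg_eq_0_iff[of UNIV "\<lambda>j. c$j * x$j"] t eq by simp
  have "x$j = 0" if "j \<in> I2" for j
  proof (cases "j \<in> I1")
    case True then show ?thesis using x by (simp add: Sset_def)
  next
    case False
    then have "0 < c$j" using s that unfolding sign_ok_def by blast
    moreover have "c$j * x$j = 0" using z by blast
    ultimately show ?thesis by simp
  qed
  then show "x \<in> Sset (- I2)" using x by (simp add: Sset_def)
qed

lemma sign_inner2:
  fixes c :: "real ^ 'n::finite"
  assumes s: "sign_ok I1 I2 c" and x: "x \<in> Sset (- I1)" "x \<in> Sset (- I2)"
  shows "c \<bullet> x = 0"
proof -
  have "c$j * x$j = 0" for j
    using s x unfolding sign_ok_def Sset_def by (cases "j \<in> I1"; cases "j \<in> I2") auto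
  then show ?thesis by (auto simp: inner_vec_def intro!: sum.neutral)
qed

lemma axis_Sset: "k \<notin> I \<Longrightarrow> axis k (1::real) \<in> Sset (- I)"
  by (auto simp: Sset_def axis_def)

lemma axis_notin: "k \<in> I \<Longrightarrow> axis k (1::real) \<notin> Sset (- I)"
proof -
  assume k: "k \<in> I"
  have "axis k 1 $ k \<noteq> (0::real)" by simp
  with k show ?thesis unfolding Sset_def by blast
qed

lemma sep_coord:
  fixes c :: "real ^ 'n::finite" and g :: "real ^ 'm::finite \<Rightarrow> real ^ 'n"
  assumes surj: "\<And>x. \<exists>f. g f = x" and uf: "\<And>f. u \<bullet> f = c \<bullet> g f"
  shows "separating_form u {f. g f \<in> Sset (- I1)} {f. g f \<in> Sset (- I2)} \<longleftrightarrow> sign_ok I1 I2 c"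
proof
  assume sep: "separating_form u {f. g f \<in> Sset (- I1)} {f. g f \<in> Sset (- I2)}"
  have ck: "c \<bullet> axis k 1 = c$k" for k by (simp add: inner_axis)
  have A: "0 < c$k" if "k \<in> I2" "k \<notin> I1" for k
  proof -
    obtain f where f: "g f = axis k 1" using surj by blast
    have f1: "f \<in> {f. g f \<in> Sset (- I1)}" using f axis_Sset[OF that(2)] by simp
    have f2: "f \<notin> {f. g f \<in> Sset (- I2)}" using f axis_notin[OF that(1)] by simp
    have "0 \<le> c$k" using sep f1 uf[of f] f ck unfolding separating_form_def by metis
    moreover have "c$k \<noteq> 0"
    proof
      assume "c$k = 0"
      then have "f \<in> {f. g f \<in> Sset (- I1)} \<inter> {f. u \<bullet> f = 0}" using f1 uf[of f] f ck by simp
      then show False using sep f2 unfolding separating_form_def by blast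
    qed
    ultimately show ?thesis by simp
  qed
  have B: "c$k < 0" if "k \<in> I1" "k \<notin> I2" for k
  proof -
    obtain f where f: "g f = axis k 1" using surj by blast
    have f1: "f \<in> {f. g f \<in> Sset (- I2)}" using f axis_Sset[OF that(2)] by simp
    have f2: "f \<notin> {f. g f \<in> Sset (- I1)}" using f axis_notin[OF that(1)] by simp
    have "c$k \<le> 0" using sep f1 uf[of f] f ck unfolding separating_form_def by metis
    moreover have "c$k \<noteq> 0"
    proof
      assume "c$k = 0"
      then have "f \<in> {f. g f \<in> Sset (- I2)} \<inter> {f. u \<bullet> f = 0}" using f1 uf[of f] f ck by simp
      then show False using sep f2 unfolding separating_form_def by blast
    qed
    ultimately show ?thesis by simp
  qed
  have C: "c$k = 0" if "k \<notin> I1" "k \<notin> I2" for k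
  proof -
    obtain f where f: "g f = axis k 1" using surj by blast
    have f1: "f \<in> {f. g f \<in> Sset (- I1)}" using f axis_Sset[OF that(1)] by simp
    have f2: "f \<in> {f. g f \<in> Sset (- I2)}" using f axis_Sset[OF that(2)] by simp
    have "f \<in> {f. g f \<in> Sset (- I1)} \<inter> {f. u \<bullet> f = 0}"
      using sep f1 f2 unfolding separating_form_def by blast
    then show ?thesis using uf[of f] f ck by simp
  qed
  show "sign_ok I1 I2 c" unfolding sign_ok_def using A B C by blast
next
  assume s: "sign_ok I1 I2 c"
  have s': "sign_ok I2 I1 (-c)" using sign_ok_sym[OF s] .
  have u': "u \<bullet> f = - ((-c) \<bullet> g f)" for f using uf by simp
  show "separating_form u {f. g f \<in> Sset (- I1)} {f. g f \<in> Sset (- I2)}"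
    unfolding separating_form_def
  proof (intro conjI)
    show "\<forall>f\<in>{f. g f \<in> Sset (- I1)}. 0 \<le> u \<bullet> f" using sign_inner1(1)[OF s] uf by simp
    show "\<forall>f\<in>{f. g f \<in> Sset (- I2)}. u \<bullet> f \<le> 0" using sign_inner1(1)[OF s'] u' by simp
    show "{f. g f \<in> Sset (- I1)} \<inter> {f. u \<bullet> f = 0} = {f. g f \<in> Sset (- I1)} \<inter> {f. g f \<in> Sset (- I2)}"
      using sign_inner1(2)[OF s] sign_inner2[OF s] uf by auto
    show "{f. g f \<in> Sset (- I2)} \<inter> {f. u \<bullet> f = 0} = {f. g f \<in> Sset (- I1)} \<inter> {f. g f \<in> Sset (- I2)}"
      using sign_inner1(2)[OF s'] sign_inner2[OF s] u' by auto
  qed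
qed




lemma rat_inner: "a \<in> rat_vecs \<Longrightarrow> b \<in> rat_vecs \<Longrightarrow> (a::real^'n) \<bullet> b \<in> \<rat>"
  unfolding rat_vecs_def inner_vec_def by (auto intro!: Rats_mult)

lemma rat_approx:
  fixes x :: "real ^ 'n" assumes e: "0 < e"
  shows "\<exists>y\<in>rat_vecs. \<forall>j. \<bar>y$j - x$j\<bar> < e"
proof -
  have "\<forall>j. \<exists>r. r \<in> \<rat> \<and> x$j - e < r \<and> r < x$j + e"
  proof
    fix j
    show "\<exists>r. r \<in> \<rat> \<and> x$j - e < r \<and> r < x$j + e"
      using Rats_dense_in_real[of "x$j - e" "x$j + e"] e by auto
  qed
  then obtain f where f: "\<And>j. f j \<in> \<rat> \<and> x$j - e < f j \<and> f j < x$j + e" by metis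
  have "vec_lambda f \<in> rat_vecs" using f by (simp add: rat_vecs_def)
  moreover have "\<bar>vec_lambda f $ j - x$j\<bar> < e" for j
  proof -
    have "x$j - e < f j" "f j < x$j + e" using f[of j] by auto
    then show ?thesis by simp
  qed
  ultimately show ?thesis by blast
qed

lemma inner_bound:
  fixes a d :: "real ^ 'n"
  assumes "\<forall>j. \<bar>d$j\<bar> < e"
  shows "\<bar>a \<bullet> d\<bar> \<le> (\<Sum>i\<in>UNIV. \<bar>a$i\<bar>) * e"
proof -
  have "\<bar>a \<bullet> d\<bar> = \<bar>\<Sum>i\<in>UNIV. a$i * d$i\<bar>" by (simp add: inner_vec_def)
  also have "\<dots> \<le> (\<Sum>i\<in>UNIV. \<bar>a$i * d$i\<bar>)" by (rule sum_abs)
  also have "\<dots> \<le> (\<Sum>i\<in>UNIV. \<bar>a$i\<bar> * e)"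
  proof (rule sum_mono)
    fix i
    have "\<bar>d$i\<bar> \<le> e" using assms less_imp_le by blast
    then show "\<bar>a$i * d$i\<bar> \<le> \<bar>a$i\<bar> * e" by (simp add: abs_mult mult_left_mono)
  qed
  also have "\<dots> = (\<Sum>i\<in>UNIV. \<bar>a$i\<bar>) * e" by (simp add: sum_distrib_right)
  finally show ?thesis .
qed

lemma rat_density:
  fixes R :: "(real ^ 'n) set" and x :: "real ^ 'n"
  assumes "finite R" "R \<subseteq> rat_vecs" "\<forall>r\<in>R. r \<bullet> x = 0" "0 < e"
  shows "\<exists>y\<in>rat_vecs. (\<forall>r\<in>R. r \<bullet> y = 0) \<and> (\<forall>j. \<bar>y$j - x$j\<bar> < e)"
  using assms
proof (induction "card R" arbitrary: R e rule: less_induct)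
  case less
  show ?case
  proof (cases "\<exists>a\<in>R. a \<noteq> 0")
    case False
    obtain y where y: "y \<in> rat_vecs" "\<forall>j. \<bar>y$j - x$j\<bar> < e" using rat_approx[OF less.prems(4), of x] by blast
    have "\<forall>r\<in>R. r \<bullet> y = 0" using False by (metis inner_zero_left)
    then show ?thesis using y by blast
  next
    case True
    then obtain a where aR: "a \<in> R" and a0: "a \<noteq> 0" by blast
    then obtain p where ap: "a$p \<noteq> 0" by (metis vec_eq_iff zero_index)
    have arat: "a \<in> rat_vecs" using aR less.prems(2) by blast
    define R' where "R' = (\<lambda>r. r - (r$p / a$p) *\<^sub>R a) ` (R - {a})"
    have finR': "finite R'" using less.prems(1) by (simp add: R'_def)
    have "card R' \<le> card (R - {a})" unfolding R'_def by (rule card_image_le) (use less.prems(1) in simp)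
    also have "\<dots> < card R" using less.prems(1) aR by (rule card_Diff1_less)
    finally have cardlt: "card R' < card R" .
    have R'rat: "R' \<subseteq> rat_vecs"
    proof
      fix r' assume "r' \<in> R'"
      then obtain r where r: "r \<in> R" "r' = r - (r$p / a$p) *\<^sub>R a" unfolding R'_def by blast
      have "r \<in> rat_vecs" using r(1) less.prems(2) by blast
      then show "r' \<in> rat_vecs" using arat r(2) unfolding rat_vecs_def
        by (auto intro!: Rats_diff Rats_mult Rats_divide)
    qed
    have ax: "a \<bullet> x = 0" using aR less.prems(3) by blast
    have R'x: "\<forall>r\<in>R'. r \<bullet> x = 0"
      using less.prems(3) ax unfolding R'_def by (auto simp: inner_diff_left)
    have R'p: "\<forall>r\<in>R'. r$p = 0" unfolding R'_def using ap by auto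
    define S where "S = (\<Sum>i\<in>UNIV. \<bar>a$i\<bar>) / \<bar>a$p\<bar>"
    have S0: "0 \<le> S" unfolding S_def by (auto intro!: divide_nonneg_nonneg sum_nonneg)
    define e' where "e' = e / (2 + S)"
    have e'0: "0 < e'" unfolding e'_def using S0 less.prems(4) by simp
    obtain y' where y': "y' \<in> rat_vecs" "\<forall>r\<in>R'. r \<bullet> y' = 0" "\<forall>j. \<bar>y'$j - x$j\<bar> < e'"
      using less.hyps[OF cardlt finR' R'rat R'x e'0] by blast
    define t where "t = - (a \<bullet> y') / a$p"
    define y where "y = y' + t *\<^sub>R axis p 1"
    have trat: "t \<in> \<rat>" unfolding t_def using rat_inner[OF arat y'(1)] arat
      unfolding rat_vecs_def by (auto intro!: Rats_divide)
    have yrat: "y \<in> rat_vecs" using y'(1) trat unfolding y_def rat_vecs_def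
      by (auto simp: axis_def intro!: Rats_add Rats_mult)
    have ay: "a \<bullet> y = 0" unfolding y_def t_def using ap by (simp add: inner_add_right inner_diff_right inner_axis inner_commute[of a "axis p 1"] inner_axis')
    have R'y: "r \<bullet> y = 0" if "r \<in> R'" for r
      using y'(2) R'p that unfolding y_def by (simp add: inner_add_right inner_axis)
    have Ry: "r \<bullet> y = 0" if r: "r \<in> R" for r
    proof (cases "r = a")
      case True then show ?thesis using ay by simp
    next
      case False
      then have "r - (r$p / a$p) *\<^sub>R a \<in> R'" unfolding R'_def using r by blast
      then have "(r - (r$p / a$p) *\<^sub>R a) \<bullet> y = 0" by (rule R'y)
      then show ?thesis using ay by (simp add: inner_diff_left)
    qed
    have close: "\<bar>y$j - x$j\<bar> < e" for j
    proof (cases "j = p")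
      case False
      then have "\<bar>y$j - x$j\<bar> = \<bar>y'$j - x$j\<bar>" unfolding y_def by (simp add: axis_def)
      also have "\<dots> < e'" using y'(3) by blast
      also have "e' \<le> e" unfolding e'_def using S0 less.prems(4) by (simp add: divide_le_eq)
      finally show ?thesis .
    next
      case True
      have d: "\<forall>j. \<bar>(y' - x)$j\<bar> < e'" using y'(3) by simp
      have "t = - (a \<bullet> (y' - x)) / a$p" unfolding t_def using ax by (simp add: inner_diff_right)
      then have "\<bar>t\<bar> = \<bar>a \<bullet> (y' - x)\<bar> / \<bar>a$p\<bar>" by (simp add: abs_divide)
      also have "\<dots> \<le> ((\<Sum>i\<in>UNIV. \<bar>a$i\<bar>) * e') / \<bar>a$p\<bar>"
        by (rule divide_right_mono[OF inner_bound[OF d]]) simp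
      also have "\<dots> = S * e'" unfolding S_def by simp
      finally have tb: "\<bar>t\<bar> \<le> S * e'" .
      have "y$j - x$j = (y'$p - x$p) + t" unfolding y_def True by simp
      then have "\<bar>y$j - x$j\<bar> \<le> \<bar>y'$p - x$p\<bar> + \<bar>t\<bar>" by linarith
      also have "\<dots> < e' + S * e'" using y'(3) tb by (meson add_less_le_mono)
      also have "\<dots> = (1 + S) * e'" by (simp add: algebra_simps)
      also have "\<dots> < e" unfolding e'_def using S0 less.prems(4) by (simp add: field_simps)
      finally show ?thesis .
    qed
    show ?thesis using yrat Ry close by blast
  qed
qed




lemma mv_nth_inner: "((A::real^'n^'m) *v x) $ i = (A $ i) \<bullet> x"
  by (simp add: matrix_vector_mult_def inner_vec_def mult.commute)

lemma rat_scale_int: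
  fixes x :: "real ^ 'n::finite"
  assumes "x \<in> rat_vecs"
  shows "\<exists>d::real. 0 < d \<and> d *\<^sub>R x \<in> int_vecs"
proof -
  have "\<forall>i. \<exists>m::int. 0 < m \<and> of_int m * x$i \<in> \<int>"
  proof
    fix i
    have "x$i \<in> \<rat>" using assms by (simp add: rat_vecs_def)
    then obtain a b where ab: "b > 0" "x$i = of_int a / of_int b" by (elim Rats_cases')
    then have "of_int b * x$i = of_int a" by simp
    then show "\<exists>m::int. 0 < m \<and> of_int m * x$i \<in> \<int>" using ab(1) by (metis Ints_of_int)
  qed
  then obtain m where m: "\<And>i. 0 < m i \<and> of_int (m i) * x$i \<in> \<int>" by metis
  define d where "d = (\<Prod>i\<in>UNIV. real_of_int (m i))"
  have d0: "0 < d" unfolding d_def using m by (auto intro!: prod_pos)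
  have "d * x$i \<in> \<int>" for i
  proof -
    have "d = real_of_int (m i) * (\<Prod>j\<in>UNIV - {i}. real_of_int (m j))"
      unfolding d_def by (simp add: prod.remove)
    then have e: "d * x$i = (real_of_int (m i) * x$i) * (\<Prod>j\<in>UNIV - {i}. real_of_int (m j))"
      by (simp add: algebra_simps)
    moreover have "(\<Prod>j\<in>UNIV - {i}. real_of_int (m j)) \<in> \<int>"
      by (metis Ints_of_int of_int_prod)
    ultimately show ?thesis using m[of i] by (metis Ints_mult)
  qed
  then show ?thesis using d0 by (auto simp: int_vecs_def)
qed




theorem lemma3p3:
  fixes Qm :: "real ^ 'e ^ 'k" and v :: "'e \<Rightarrow> real ^ 'e"
    and \<gamma>1 \<gamma>2 :: "(real ^ 'e) set"
  assumes Q_int: "\<forall>i j. Qm $ i $ j \<in> \<int>"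
    and v_rat: "\<forall>i. v i \<in> rat_vecs"
    and v_indep: "independent (range v)" and v_inj: "inj v"
    and face1: "cone_face \<gamma>1 (gen_cone v)"
    and face2: "cone_face \<gamma>2 (gen_cone v)"
  defines "\<delta> \<equiv> dual_cone (gen_cone v)"
    and "L \<equiv> {f \<in> int_vecs. \<forall>m \<in> {m \<in> int_vecs. Qm *v m = 0}. f \<bullet> m = 0}"
  shows "(\<exists>u \<in> int_vecs. (\<forall>l\<in>L. u \<bullet> l = 0) \<and>
             separating_form u (face_star \<delta> \<gamma>1) (face_star \<delta> \<gamma>2))
         \<longleftrightarrow> rel_interior ((\<lambda>x. Qm *v x) ` \<gamma>1) \<inter> rel_interior ((\<lambda>x. Qm *v x) ` \<gamma>2) \<noteq> {}"
proof -
  obtain B where B: "B ** Vm v = mat 1" "Vm v ** B = mat 1" using Vm_inv[OF v_indep v_inj] by blast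
  have surjg: "\<And>x. \<exists>f. transpose (Vm v) *v f = x" using Vt_surj[OF B(1)] by blast
  obtain I1 where g1: "\<gamma>1 = (\<lambda>c. Vm v *v c) ` Sset I1" using face_Vm[OF face1] by blast
  obtain I2 where g2: "\<gamma>2 = (\<lambda>c. Vm v *v c) ` Sset I2" using face_Vm[OF face2] by blast
  have fs1: "face_star \<delta> \<gamma>1 = {f. transpose (Vm v) *v f \<in> Sset (- I1)}"
    unfolding \<delta>_def g1 by (rule face_star_Vm)
  have fs2: "face_star \<delta> \<gamma>2 = {f. transpose (Vm v) *v f \<in> Sset (- I2)}"
    unfolding \<delta>_def g2 by (rule face_star_Vm)
  define T where "T = Qm ** Vm v"
  have img: "(\<lambda>x. Qm *v x) ` ((\<lambda>c. Vm v *v c) ` Sset I) = (\<lambda>c. T *v c) ` Sset I" for I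
    unfolding T_def by (simp add: image_image matrix_vector_mul_assoc)
  have ri: "rel_interior ((\<lambda>c. T *v c) ` Sset I) = (\<lambda>c. T *v c) ` Spos I" for I
    using rel_interior_convex_linear_image[OF matrix_vector_mul_linear convex_Sset, of T I]
      rel_interior_Sset[of I] by simp
  have sepc: "separating_form (Vm v *v c) (face_star \<delta> \<gamma>1) (face_star \<delta> \<gamma>2) \<longleftrightarrow> sign_ok I1 I2 c" for c
    unfolding fs1 fs2 by (rule sep_coord[OF surjg inner_Vm2])
  have RHS: "rel_interior ((\<lambda>x. Qm *v x) ` \<gamma>1) \<inter> rel_interior ((\<lambda>x. Qm *v x) ` \<gamma>2) \<noteq> {}
      \<longleftrightarrow> (\<exists>c. T *v c = 0 \<and> sign_ok I1 I2 c)"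
  proof
    assume "rel_interior ((\<lambda>x. Qm *v x) ` \<gamma>1) \<inter> rel_interior ((\<lambda>x. Qm *v x) ` \<gamma>2) \<noteq> {}"
    then obtain a b where a: "a \<in> Spos I1" and b: "b \<in> Spos I2" and ab: "T *v a = T *v b"
      unfolding g1 g2 img ri by blast
    have "T *v (b - a) = 0" using ab by (simp add: matrix_vector_mult_diff_distrib)
    moreover have "sign_ok I1 I2 (b - a)"
      using a b unfolding Spos_def sign_ok_def by auto
    ultimately show "\<exists>c. T *v c = 0 \<and> sign_ok I1 I2 c" by blast
  next
    assume "\<exists>c. T *v c = 0 \<and> sign_ok I1 I2 c"
    then obtain c where c: "T *v c = 0" "sign_ok I1 I2 c" by blast
    define a where "a = (\<chi> j. if j \<in> I1 then (if j \<in> I2 then 1 + \<bar>c$j\<bar> else - c$j) else 0)"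
    define b where "b = a + c"
    have a: "a \<in> Spos I1" using c(2) unfolding a_def Spos_def sign_ok_def by auto
    have b: "b \<in> Spos I2" using c(2) unfolding b_def a_def Spos_def sign_ok_def by auto
    have "T *v b = T *v a" unfolding b_def using c(1) by (simp add: matrix_vector_right_distrib)
    then have "T *v a \<in> rel_interior ((\<lambda>x. Qm *v x) ` \<gamma>1) \<inter> rel_interior ((\<lambda>x. Qm *v x) ` \<gamma>2)"
      unfolding g1 g2 img ri using a b by (metis IntI image_eqI)
    then show "rel_interior ((\<lambda>x. Qm *v x) ` \<gamma>1) \<inter> rel_interior ((\<lambda>x. Qm *v x) ` \<gamma>2) \<noteq> {}" by blast
  qed
  have rowL: "Qm $ r \<in> L" for r
    unfolding L_def int_vecs_def using Q_int by (auto simp: mv_nth_inner[symmetric])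
  have LHS: "(\<exists>u \<in> int_vecs. (\<forall>l\<in>L. u \<bullet> l = 0) \<and>
             separating_form u (face_star \<delta> \<gamma>1) (face_star \<delta> \<gamma>2))
      \<longleftrightarrow> (\<exists>c. T *v c = 0 \<and> sign_ok I1 I2 c)"
  proof
    assume "\<exists>u \<in> int_vecs. (\<forall>l\<in>L. u \<bullet> l = 0) \<and> separating_form u (face_star \<delta> \<gamma>1) (face_star \<delta> \<gamma>2)"
    then obtain u where u: "u \<in> int_vecs" "\<forall>l\<in>L. u \<bullet> l = 0"
      "separating_form u (face_star \<delta> \<gamma>1) (face_star \<delta> \<gamma>2)" by blast
    define c where "c = B *v u"
    have uc: "u = Vm v *v c" unfolding c_def by (simp add: matrix_vector_mul_assoc B(2))
    have "sign_ok I1 I2 c" using u(3) sepc uc by simp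
    moreover have "Qm *v u = 0"
    proof -
      have "(Qm *v u) $ r = 0" for r
        using u(2) rowL[of r] by (metis inner_commute mv_nth_inner)
      then show ?thesis by (simp add: vec_eq_iff)
    qed
    then have "T *v c = 0" unfolding T_def using uc by (simp add: matrix_vector_mul_assoc[symmetric])
    ultimately show "\<exists>c. T *v c = 0 \<and> sign_ok I1 I2 c" by blast
  next
    assume "\<exists>c. T *v c = 0 \<and> sign_ok I1 I2 c"
    then obtain c where c: "T *v c = 0" "sign_ok I1 I2 c" by blast
    define R where "R = range (\<lambda>r. T $ r) \<union> (\<lambda>j. axis j (1::real)) ` (- (I1 \<union> I2))"
    have finR: "finite R" unfolding R_def by simp
    have Vrat: "Vm v $ k $ j \<in> \<rat>" for k j using v_rat by (simp add: Vm_def rat_vecs_def)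
    have Qrat: "Qm $ i $ j \<in> \<rat>" for i j using Q_int Ints_subset_Rats by blast
    have Trat: "T $ r \<in> rat_vecs" for r
      unfolding T_def rat_vecs_def using Vrat Qrat
      by (auto simp: matrix_matrix_mult_def intro!: Rats_sum Rats_mult)
    have Rrat: "R \<subseteq> rat_vecs" unfolding R_def using Trat
      by (auto simp: rat_vecs_def axis_def)
    have Rc: "\<forall>r\<in>R. r \<bullet> c = 0"
      unfolding R_def using c by (auto simp: mv_nth_inner[symmetric] inner_axis' sign_ok_def)
    define e where "e = Min (insert 1 ((\<lambda>j. \<bar>c$j\<bar>) ` {j. c$j \<noteq> 0}))"
    have e0: "0 < e" unfolding e_def by auto
    have ec: "e \<le> \<bar>c$j\<bar>" if "c$j \<noteq> 0" for j unfolding e_def using that by auto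
    obtain y where y: "y \<in> rat_vecs" "\<forall>r\<in>R. r \<bullet> y = 0" "\<forall>j. \<bar>y$j - c$j\<bar> < e"
      using rat_density[OF finR Rrat Rc e0] by blast
    have sy: "sign_ok I1 I2 y"
      unfolding sign_ok_def
    proof (intro conjI allI impI)
      fix j assume j: "j \<in> I2 \<and> j \<notin> I1"
      then have "0 < c$j" using c(2) unfolding sign_ok_def by blast
      then show "0 < y$j" using ec[of j] y(3) by (smt (verit))
    next
      fix j assume j: "j \<in> I1 \<and> j \<notin> I2"
      then have "c$j < 0" using c(2) unfolding sign_ok_def by blast
      then show "y$j < 0" using ec[of j] y(3) by (smt (verit))
    next
      fix j assume j: "j \<notin> I1 \<and> j \<notin> I2"
      then have "axis j 1 \<in> R" unfolding R_def by blast
      then have "axis j 1 \<bullet> y = 0" using y(2) by blast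
      then show "y$j = 0" by (simp add: inner_axis')
    qed
    have Ty: "T *v y = 0"
    proof -
      have "(T *v y) $ r = 0" for r using y(2) unfolding R_def by (simp add: mv_nth_inner)
      then show ?thesis by (simp add: vec_eq_iff)
    qed
    have u0rat: "Vm v *v y \<in> rat_vecs"
      using y(1) Vrat unfolding rat_vecs_def
      by (auto simp: matrix_vector_mult_def intro!: Rats_sum Rats_mult)
    obtain d where d: "0 < d" "d *\<^sub>R (Vm v *v y) \<in> int_vecs" using rat_scale_int[OF u0rat] by blast
    define c' where "c' = d *\<^sub>R y"
    define u where "u = Vm v *v c'"
    have uint: "u \<in> int_vecs" unfolding u_def c'_def using d(2) by (simp add: matrix_vector_mult_scaleR)
    have sc': "sign_ok I1 I2 c'" using sy d(1) unfolding sign_ok_def c'_def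
      by (auto simp: mult_pos_neg zero_less_mult_iff)
    have Qu: "Qm *v u = 0" unfolding u_def c'_def
      by (simp add: matrix_vector_mult_scaleR matrix_vector_mul_assoc Ty flip: T_def)
    have Linv: "\<forall>l\<in>L. u \<bullet> l = 0" using uint Qu unfolding L_def by (auto simp: inner_commute)
    have "separating_form u (face_star \<delta> \<gamma>1) (face_star \<delta> \<gamma>2)" unfolding u_def using sepc sc' by simp
    then show "\<exists>u \<in> int_vecs. (\<forall>l\<in>L. u \<bullet> l = 0) \<and> separating_form u (face_star \<delta> \<gamma>1) (face_star \<delta> \<gamma>2)"
      using uint Linv by blast
  qed
  show ?thesis using LHS RHS by simp
qed


end
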